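(* (i) The set of double cones of Minkowski spacetime, with the Poincaré group as symmetry group, has a covariant path-frame system. (ii) The set of nonempty open connected intervals of $S^1$ having closure different from $S^1$, with the Möbius group as symmetry group, does not have a covariant path-frame system.
   Context: Both sets are ordered by inclusion and are causal posets. Double cones: sets $s(o_R)$ with $R>0$, $o_R=\{(t,\mathbf x):|t|+|\mathbf x|<R\}$ and $s$ a proper orthochronous Poincaré transformation; $o_1\perp o_2$ iff all points of $o_1$ are spacelike separated from all points of $o_2$. For intervals of $S^1$, $\perp$ is disjointness. The symmetry group $S$ acts by $o\mapsto s(o)$; $S_a$ denotes the stabilizer of $a$. A 1-simplex is $b=(|b|;\partial_0b,\partial_1b)$ with $\partial_0b,\partial_1b\subseteq|b|$, opposite $\overline b=(|b|;\partial_1b,\partial_0b)$, $s(b)=(s(|b|);s(\partial_0b),s(\partial_1b))$. $\mathrm T_1(K)$: 1-simplices with $\partial_0b\ne|b|\ne\partial_1b$. $\mathrm F(K)$: group generated by $\mathrm T_1(K)$ with $b^{-1}=\overline b$, with $S$ acting letterwise. A path from $a$ to $o$ is a word $b_n\cdots b_1$, $b_i\in\mathrm T_1(K)$ (empty if $a=o$ allowed), with $\partial_1b_1=a$, $\partial_0b_n=o$, $\partial_0b_i=\partial_1b_{i+1}$. A path-frame $P_o$ over $o$ is a choice of a path $p_{(o,a)}$ from $o$ to $a$ for each $a\in K$ with $p_{(o,o)}=1$. A covariant path-frame system is a family $\{P_o:o\in K\}$ with $s(p_{(a,x)})=p_{(s(a),s(x))}$ for all $a,x\in K$, $s\in S$.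 *)

theory Defs
  imports "HOL-Analysis.Analysis"
begin

type_synonym 'a simplex1 = "'a set \<times> 'a set \<times> 'a set"

definition supp1 :: "'a simplex1 \<Rightarrow> 'a set" where "supp1 b = fst b"
definition bd0 :: "'a simplex1 \<Rightarrow> 'a set" where "bd0 b = fst (snd b)"
definition bd1 :: "'a simplex1 \<Rightarrow> 'a set" where "bd1 b = snd (snd b)"

definition opp1 :: "'a simplex1 \<Rightarrow> 'a simplex1" where
  "opp1 b = (supp1 b, bd1 b, bd0 b)"

definition act1 :: "('a \<Rightarrow> 'a) \<Rightarrow> 'a simplex1 \<Rightarrow> 'a simplex1" where
  "act1 s b = (s ` supp1 b, s ` bd0 b, s ` bd1 b)"

definition T1 :: "'a set set \<Rightarrow> 'a simplex1 set" where
  "T1 K = {b. supp1 b \<in> K \<and> bd0 b \<in> K \<and> bd1 b \<in> K \<and>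
              bd0 b \<subseteq> supp1 b \<and> bd1 b \<subseteq> supp1 b \<and>
              bd0 b \<noteq> supp1 b \<and> supp1 b \<noteq> bd1 b}"

text \<open>Elements of F(K) are represented by words (lists, letters in order of
  application b_1, ..., b_n); two words represent the same element iff they are
  related by the equivalence generated by cancelling adjacent pairs b, opp b
  (the relation b^{-1} = opp b).\<close>
definition cancel1 :: "'a simplex1 list \<Rightarrow> 'a simplex1 list \<Rightarrow> bool" where
  "cancel1 xs ys \<longleftrightarrow> (\<exists>u b v. xs = u @ [b, opp1 b] @ v \<and> ys = u @ v)"

definition FK_eq :: "'a simplex1 list \<Rightarrow> 'a simplex1 list \<Rightarrow> bool" where
  "FK_eq = equivclp cancel1"

text \<open>A path from a to o: word b_n ... b_1 (stored as [b_1,...,b_n]).\<close>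
definition is_path :: "'a set set \<Rightarrow> 'a set \<Rightarrow> 'a set \<Rightarrow> 'a simplex1 list \<Rightarrow> bool" where
  "is_path K a u p \<longleftrightarrow>
     set p \<subseteq> T1 K \<and>
     (p = [] \<longrightarrow> a = u) \<and>
     (p \<noteq> [] \<longrightarrow> bd1 (hd p) = a \<and> bd0 (last p) = u) \<and>
     (\<forall>i. Suc i < length p \<longrightarrow> bd0 (p ! i) = bd1 (p ! Suc i))"

definition covariant_pfs ::
  "'a set set \<Rightarrow> ('a \<Rightarrow> 'a) set \<Rightarrow> ('a set \<Rightarrow> 'a set \<Rightarrow> 'a simplex1 list) \<Rightarrow> bool" where
  "covariant_pfs K S P \<longleftrightarrow>
     (\<forall>u\<in>K. \<forall>a\<in>K. is_path K u a (P u a)) \<and>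
     (\<forall>u\<in>K. FK_eq (P u u) []) \<and>
     (\<forall>a\<in>K. \<forall>x\<in>K. \<forall>s\<in>S. FK_eq (map (act1 s) (P a x)) (P (s ` a) (s ` x)))"

definition has_covariant_pfs :: "'a set set \<Rightarrow> ('a \<Rightarrow> 'a) set \<Rightarrow> bool" where
  "has_covariant_pfs K S \<longleftrightarrow> (\<exists>P. covariant_pfs K S P)"

text \<open>Points are vectors in real^4; coordinate 1 is time, the others are space.\<close>
definition spatial_norm :: "real^4 \<Rightarrow> real" where
  "spatial_norm p = sqrt (\<Sum>i\<in>UNIV - {1}. (p $ i)\<^sup>2)"

definition mink_metric :: "real^4^4" where
  "mink_metric = (\<chi> i j. if i = j then (if i = 1 then 1 else -1) else 0)"

definition proper_orthochronous_lorentz :: "real^4^4 \<Rightarrow> bool" where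
  "proper_orthochronous_lorentz L \<longleftrightarrow>
     transpose L ** mink_metric ** L = mink_metric \<and> det L = 1 \<and> L $ 1 $ 1 \<ge> 1"

definition poincare_group :: "(real^4 \<Rightarrow> real^4) set" where
  "poincare_group = {(\<lambda>p. L *v p + c) | L c. proper_orthochronous_lorentz L}"

definition std_double_cone :: "real \<Rightarrow> (real^4) set" where
  "std_double_cone R = {p. \<bar>p $ 1\<bar> + spatial_norm p < R}"

definition double_cones :: "(real^4) set set" where
  "double_cones = {s ` std_double_cone R | s R. s \<in> poincare_group \<and> R > 0}"

definition circle :: "complex set" where "circle = sphere 0 1"

definition circle_intervals :: "complex set set" where
  "circle_intervals = {I. I \<subseteq> circle \<and> I \<noteq> {} \<and>
      openin (top_of_set circle) I \<and> connected I \<and> closure I \<noteq> circle}"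

text \<open>Moebius group of S^1: z \<mapsto> (a z + b)/(conj b z + conj a), |a|^2 - |b|^2 = 1
  (i.e. PSU(1,1) \<cong> PSL(2,R), acting on the circle).\<close>
definition moebius_group :: "(complex \<Rightarrow> complex) set" where
  "moebius_group = {(\<lambda>z. (a * z + b) / (cnj b * z + cnj a)) | a b.
                     (cmod a)\<^sup>2 - (cmod b)\<^sup>2 = 1}"

end

theory Submission
  imports Defs
begin



lemma mm_entry: "(A ** B) $ i $ j = (\<Sum>k\<in>UNIV. A $ i $ k * B $ k $ j)"
  by (simp add: matrix_matrix_mult_def)

lemma eta_eta: "mink_metric ** mink_metric = (mat 1 :: real^4^4)"
  by (simp add: vec_eq_iff mm_entry mink_metric_def mat_def sum_4 forall_4)

lemma lor_inv:
  assumes "proper_orthochronous_lorentz L"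
  shows "(mink_metric ** transpose L ** mink_metric) ** L = mat 1"
        "L ** (mink_metric ** transpose L ** mink_metric) = mat 1"
proof -
  have e: "transpose L ** mink_metric ** L = mink_metric" using assms
    by (simp add: proper_orthochronous_lorentz_def)
  show 1: "(mink_metric ** transpose L ** mink_metric) ** L = mat 1"
    by (metis e eta_eta matrix_mul_assoc)
  show "L ** (mink_metric ** transpose L ** mink_metric) = mat 1"
    using 1 matrix_left_right_inverse by blast
qed

lemma lor_row:
  assumes "proper_orthochronous_lorentz L"
  shows "L$1$1^2 - L$1$2^2 - L$1$3^2 - L$1$4^2 = 1"
proof -
  have "L ** mink_metric ** transpose L = (L ** (mink_metric ** transpose L ** mink_metric)) ** mink_metric"
    by (metis eta_eta matrix_mul_assoc matrix_mul_rid)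
  also have "\<dots> = mink_metric" using lor_inv(2)[OF assms] by simp
  finally have "(L ** mink_metric ** transpose L) $1$1 = mink_metric $1$1" by simp
  then show ?thesis
    by (simp add: mm_entry sum_4 mink_metric_def transpose_def power2_eq_square)
qed

lemma lor_col:
  assumes "proper_orthochronous_lorentz L"
  shows "L$1$1^2 - L$2$1^2 - L$3$1^2 - L$4$1^2 = 1"
proof -
  have "(transpose L ** mink_metric ** L) $1$1 = mink_metric $1$1" using assms
    by (simp add: proper_orthochronous_lorentz_def)
  then show ?thesis
    by (simp add: mm_entry sum_4 mink_metric_def transpose_def power2_eq_square)
qed

lemma cs3: "((a2::real)*b2+a3*b3+a4*b4)^2 \<le> (a2^2+a3^2+a4^2)*(b2^2+b3^2+b4^2)"
proof -
  have "(a2^2+a3^2+a4^2)*(b2^2+b3^2+b4^2) - (a2*b2+a3*b3+a4*b4)^2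
     = (a2*b3-a3*b2)^2+(a2*b4-a4*b2)^2+(a3*b4-a4*b3)^2"
    by (simp add: power2_eq_square algebra_simps)
  moreover have "(a2*b3-a3*b2)^2+(a2*b4-a4*b2)^2+(a3*b4-a4*b3)^2 \<ge> 0" by simp
  ultimately show ?thesis by linarith
qed

lemma lor_mul:
  assumes "proper_orthochronous_lorentz M" "proper_orthochronous_lorentz L"
  shows "proper_orthochronous_lorentz (M ** L)"
proof -
  have eM: "transpose M ** mink_metric ** M = mink_metric" and eL: "transpose L ** mink_metric ** L = mink_metric"
    using assms by (auto simp: proper_orthochronous_lorentz_def)
  have "transpose (M ** L) ** mink_metric ** (M ** L) = transpose L ** ((transpose M ** mink_metric ** M) ** L)"
    by (simp add: matrix_transpose_mul matrix_mul_assoc)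
  also have "\<dots> = transpose L ** (mink_metric ** L)" by (simp only: eM)
  also have "\<dots> = mink_metric" by (simp add: matrix_mul_assoc eL)
  finally have 1: "transpose (M ** L) ** mink_metric ** (M ** L) = mink_metric" .
  have 2: "det (M ** L) = 1" using assms by (simp add: det_mul proper_orthochronous_lorentz_def)
  define a where "a = M$1$1"
  define b where "b = L$1$1"
  have m1: "a \<ge> 1" and l1: "b \<ge> 1" using assms by (auto simp: proper_orthochronous_lorentz_def a_def b_def)
  define X where "X = M$1$2*L$2$1 + M$1$3*L$3$1 + M$1$4*L$4$1"
  have r: "a^2 - 1 = (M$1$2)^2 + (M$1$3)^2 + (M$1$4)^2" using lor_row[OF assms(1)] unfolding a_def by linarith
  have c: "b^2 - 1 = (L$2$1)^2 + (L$3$1)^2 + (L$4$1)^2" using lor_col[OF assms(2)] unfolding b_def by linarith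
  have cs: "X^2 \<le> (a^2 - 1)*(b^2-1)"
    unfolding r c X_def by (rule cs3)
  have d: "(a*b - 1)^2 - (a^2 - 1)*(b^2-1) = (a - b)^2"
    by (simp add: power2_eq_square algebra_simps)
  have "0 \<le> (a - b)^2" by simp
  then have "X^2 \<le> (a*b - 1)^2" using cs d by linarith
  moreover have "1 * 1 \<le> a * b" using mult_mono[OF m1 l1] m1 by simp
  ultimately have "\<bar>X\<bar> \<le> a*b - 1"
    using abs_le_square_iff[of X "a*b - 1"] by simp
  moreover have "(M ** L)$1$1 = a*b + X"
    unfolding mm_entry sum_4 X_def a_def b_def by simp
  ultimately have "(M ** L)$1$1 \<ge> 1" by linarith
  then show ?thesis using 1 2 by (simp add: proper_orthochronous_lorentz_def)
qed




lemma mv_add: "A *v (x + y) = A *v x + A *v (y::real^4)"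
  using linear_add[OF matrix_vector_mul_linear] by blast
lemma mv_diff: "A *v (x - y) = A *v x - A *v (y::real^4)"
  using linear_diff[OF matrix_vector_mul_linear] by blast
lemma mv_neg: "A *v (- x) = - (A *v (x::real^4))"
  using linear_neg[OF matrix_vector_mul_linear] by blast
lemma mv_scale: "A *v (m *\<^sub>R x) = m *\<^sub>R (A *v (x::real^4))"
  using linear_scale[OF matrix_vector_mul_linear] by blast

lemma PG_elim:
  assumes "s \<in> poincare_group"
  obtains L c where "proper_orthochronous_lorentz L" "s = (\<lambda>p. L *v p + c)"
  using assms by (auto simp: poincare_group_def)

lemma PG_comp:
  assumes "t \<in> poincare_group" "s \<in> poincare_group"
  shows "t \<circ> s \<in> poincare_group"
proof -
  obtain M d where M: "proper_orthochronous_lorentz M" "t = (\<lambda>p. M *v p + d)" using PG_elim[OF assms(1)] by blast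
  obtain L c where L: "proper_orthochronous_lorentz L" "s = (\<lambda>p. L *v p + c)" using PG_elim[OF assms(2)] by blast
  have "t \<circ> s = (\<lambda>p. (M ** L) *v p + (M *v c + d))"
    by (simp add: M L fun_eq_iff mv_add matrix_vector_mul_assoc)
  then show ?thesis using lor_mul[OF M(1) L(1)] by (auto simp: poincare_group_def)
qed

lemma PG_inj:
  assumes "s \<in> poincare_group" shows "inj s"
proof -
  obtain L c where L: "proper_orthochronous_lorentz L" "s = (\<lambda>p. L *v p + c)" using PG_elim[OF assms] by blast
  show ?thesis
  proof (rule injI)
    fix x y assume "s x = s y"
    then have "L *v x = L *v y" using L by simp
    then have "((mink_metric ** transpose L ** mink_metric) ** L) *v x = ((mink_metric ** transpose L ** mink_metric) ** L) *v y"
      by (metis matrix_vector_mul_assoc)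
    then show "x = y" using lor_inv(1)[OF L(1)] by simp
  qed
qed

lemma sn_expl: "spatial_norm p = sqrt ((p$2)^2 + (p$3)^2 + (p$4)^2)"
proof -
  have "UNIV - {1::4} = {2,3,4}" using UNIV_4 by auto
  then show ?thesis by (simp add: spatial_norm_def)
qed

lemma norm_expl: "norm (p::real^4) = sqrt ((p$1)^2 + (p$2)^2 + (p$3)^2 + (p$4)^2)"
  by (simp add: norm_vec_def L2_set_def sum_4 add.assoc)

lemma sn_nonneg: "spatial_norm p \<ge> 0" by (simp add: sn_expl)

lemma sn_le_norm: "spatial_norm p \<le> norm p"
  unfolding sn_expl norm_expl by (rule real_sqrt_le_mono) simp

lemma norm_le_sn: "norm p \<le> \<bar>p$1\<bar> + spatial_norm p"
proof -
  let ?S = "(p$2)^2 + (p$3)^2 + (p$4)^2"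
  have S: "?S \<ge> 0" by simp
  have "(p$1)^2 + ?S \<le> (\<bar>p$1\<bar> + sqrt ?S)^2"
    using S by (simp add: power2_eq_square algebra_simps)
  then have "sqrt ((p$1)^2 + ?S) \<le> \<bar>p$1\<bar> + sqrt ?S"
    by (metis abs_ge_zero add_nonneg_nonneg real_le_lsqrt real_sqrt_ge_zero S sqrt_le_D)
  then show ?thesis unfolding sn_expl norm_expl by (simp add: add.assoc)
qed

lemma sn_neg: "spatial_norm (- p) = spatial_norm p" by (simp add: sn_expl)

lemma sn_scale: "spatial_norm (m *\<^sub>R p) = \<bar>m\<bar> * spatial_norm p"
proof -
  have "(m * p$2)^2 + (m * p$3)^2 + (m * p$4)^2 = m^2 * ((p$2)^2 + (p$3)^2 + (p$4)^2)"
    by (simp add: power_mult_distrib algebra_simps)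
  then show ?thesis by (simp add: sn_expl real_sqrt_mult)
qed

lemma std_neg: "p \<in> std_double_cone R \<Longrightarrow> - p \<in> std_double_cone R"
  by (simp add: std_double_cone_def sn_neg)

lemma std_mono: "R \<le> R' \<Longrightarrow> std_double_cone R \<subseteq> std_double_cone R'"
  by (auto simp: std_double_cone_def)

lemma std_empty: "R \<le> 0 \<Longrightarrow> std_double_cone R = {}"
  using sn_nonneg by (auto simp: std_double_cone_def) (smt (verit) abs_ge_zero)

lemma std_zero: "R > 0 \<Longrightarrow> 0 \<in> std_double_cone R"
  by (simp add: std_double_cone_def sn_expl)

lemma std_scale:
  assumes "m > 0" shows "std_double_cone (R*m) = (\<lambda>p. m *\<^sub>R p) ` std_double_cone R"
proof
  show "std_double_cone (R*m) \<subseteq> (\<lambda>p. m *\<^sub>R p) ` std_double_cone R"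
  proof
    fix p assume p: "p \<in> std_double_cone (R*m)"
    have "(inverse m *\<^sub>R p) \<in> std_double_cone R"
    proof -
      have "\<bar>p$1\<bar> + spatial_norm p < R*m" using p by (simp add: std_double_cone_def)
      then have "(\<bar>p$1\<bar> + spatial_norm p) / m < R" using assms by (simp add: divide_less_eq)
      then show ?thesis using assms
        by (simp add: std_double_cone_def sn_scale abs_mult add_divide_distrib divide_inverse algebra_simps)
    qed
    moreover have "p = m *\<^sub>R (inverse m *\<^sub>R p)" using assms by simp
    ultimately show "p \<in> (\<lambda>p. m *\<^sub>R p) ` std_double_cone R" by blast
  qed
next
  show "(\<lambda>p. m *\<^sub>R p) ` std_double_cone R \<subseteq> std_double_cone (R*m)"
  proof
    fix q assume "q \<in> (\<lambda>p. m *\<^sub>R p) ` std_double_cone R"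
    then obtain p where p: "p \<in> std_double_cone R" "q = m *\<^sub>R p" by blast
    have "\<bar>p$1\<bar> + spatial_norm p < R" using p by (simp add: std_double_cone_def)
    then have "m * (\<bar>p$1\<bar> + spatial_norm p) < R * m" using assms by (simp add: mult.commute)
    then show "q \<in> std_double_cone (R*m)" using assms p
      by (simp add: std_double_cone_def sn_scale abs_mult algebra_simps)
  qed
qed

lemma std_bounded: "bounded (std_double_cone R)"
proof -
  have "std_double_cone R \<subseteq> cball 0 R"
  proof
    fix p assume "p \<in> std_double_cone R"
    then have "norm p < R" using norm_le_sn[of p] by (simp add: std_double_cone_def)
    then show "p \<in> cball 0 R" by simp
  qed
  then show ?thesis using bounded_cball bounded_subset by blast
qed

lemma cball_std: "norm p \<le> B \<Longrightarrow> 2*B < R \<Longrightarrow> p \<in> std_double_cone R"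
  using component_le_norm_cart[of p 1] sn_le_norm[of p] by (simp add: std_double_cone_def)

lemma affine_bounded: "bounded X \<Longrightarrow> bounded ((\<lambda>p. L *v p + c) ` (X::(real^4) set))"
proof -
  assume X: "bounded X"
  have "(\<lambda>p. L *v p + c) ` X = (\<lambda>x. c + x) ` ((\<lambda>p. L *v p) ` X)" by (auto simp: add.commute)
  moreover have "bounded ((\<lambda>p. L *v p) ` X)"
    by (rule bounded_linear_image[OF X]) simp
  ultimately show ?thesis using bounded_translation by metis
qed

lemma center_unique:
  fixes D :: "(real^4) set"
  assumes "bounded D" "y \<in> D" "\<forall>y\<in>D. 2 *\<^sub>R c - y \<in> D" "\<forall>y\<in>D. 2 *\<^sub>R c' - y \<in> D"
  shows "c = c'"
proof (rule ccontr)
  assume ne: "c \<noteq> c'"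
  define v where "v = 2 *\<^sub>R (c - c')"
  have vn: "norm v > 0" using ne by (simp add: v_def)
  have all: "y + real n *\<^sub>R v \<in> D" for n
  proof (induction n)
    case 0 then show ?case using assms(2) by simp
  next
    case (Suc n)
    have "2 *\<^sub>R c' - (y + real n *\<^sub>R v) \<in> D" using Suc assms(4) by blast
    then have "2 *\<^sub>R c - (2 *\<^sub>R c' - (y + real n *\<^sub>R v)) \<in> D" using assms(3) by blast
    moreover have "2 *\<^sub>R c - (2 *\<^sub>R c' - (y + real n *\<^sub>R v)) = y + real (Suc n) *\<^sub>R v"
      by (simp add: v_def algebra_simps)
    ultimately show ?case by simp
  qed
  obtain B where B: "\<forall>x\<in>D. norm x \<le> B" using assms(1) bounded_iff by blast
  obtain n :: nat where n: "(B + norm y) / norm v < real n" using reals_Archimedean2 by blast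
  have "B + norm y < real n * norm v" using n vn by (simp add: divide_less_eq)
  also have "real n * norm v = norm (real n *\<^sub>R v)" by simp
  also have "\<dots> \<le> norm (y + real n *\<^sub>R v) + norm y" by (metis add_diff_cancel_left' norm_triangle_ineq4 add.commute)
  finally have "B < norm (y + real n *\<^sub>R v)" by simp
  moreover have "norm (y + real n *\<^sub>R v) \<le> B" using B all by blast
  ultimately show False by linarith
qed

lemma aff_scale_image:
  assumes "m > 0"
  shows "(\<lambda>p. L *v p + c) ` std_double_cone (R*m) =
         (\<lambda>y. m *\<^sub>R (y - c) + c) ` ((\<lambda>p. L *v p + c) ` std_double_cone R)"
  unfolding std_scale[OF assms] image_image by (simp add: mv_scale)

lemma Rep:
  assumes s: "s \<in> poincare_group" and s': "s' \<in> poincare_group" and R: "R > 0"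
    and eq: "s ` std_double_cone R = s' ` std_double_cone R'" and m: "m > 0"
  shows "s ` std_double_cone (R*m) = s' ` std_double_cone (R'*m)"
proof -
  obtain L c where L: "proper_orthochronous_lorentz L" "s = (\<lambda>p. L *v p + c)" using PG_elim[OF s] by blast
  obtain L' c' where L': "proper_orthochronous_lorentz L'" "s' = (\<lambda>p. L' *v p + c')" using PG_elim[OF s'] by blast
  define D where "D = s ` std_double_cone R"
  have bD: "bounded D" unfolding D_def L(2) by (rule affine_bounded[OF std_bounded])
  have yD: "s 0 \<in> D" unfolding D_def using std_zero[OF R] by blast
  have sym1: "\<forall>y\<in>D. 2 *\<^sub>R c - y \<in> D"
  proof
    fix y assume "y \<in> D"
    then obtain p where p: "p \<in> std_double_cone R" "y = L *v p + c" unfolding D_def L(2) by blast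
    have "2 *\<^sub>R c - y = L *v (- p) + c" using p by (simp add: mv_neg scaleR_2)
    then show "2 *\<^sub>R c - y \<in> D" unfolding D_def L(2) using std_neg[OF p(1)] by blast
  qed
  have sym2: "\<forall>y\<in>D. 2 *\<^sub>R c' - y \<in> D"
  proof
    fix y assume "y \<in> D"
    then obtain p where p: "p \<in> std_double_cone R'" "y = L' *v p + c'" unfolding D_def eq L'(2) by blast
    have "2 *\<^sub>R c' - y = L' *v (- p) + c'" using p by (simp add: mv_neg scaleR_2)
    then show "2 *\<^sub>R c' - y \<in> D" unfolding D_def eq L'(2) using std_neg[OF p(1)] by blast
  qed
  have cc: "c = c'" using center_unique[OF bD yD sym1 sym2] .
  show ?thesis
    unfolding L(2) L'(2) aff_scale_image[OF m]
    using eq unfolding L(2) L'(2) cc by simp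
qed




definition rep :: "(real^4) set \<Rightarrow> (real^4 \<Rightarrow> real^4) \<times> real" where
  "rep u = (SOME sR. fst sR \<in> poincare_group \<and> snd sR > 0 \<and> u = fst sR ` std_double_cone (snd sR))"

definition muf :: "(real^4 \<Rightarrow> real^4) \<Rightarrow> real \<Rightarrow> (real^4) set \<Rightarrow> real" where
  "muf s R a = max 1 (Inf {m. a \<subseteq> s ` std_double_cone (R*m)}) + 1"

definition ccone :: "(real^4) set \<Rightarrow> (real^4) set \<Rightarrow> (real^4) set" where
  "ccone u a = fst (rep u) ` std_double_cone (snd (rep u) * muf (fst (rep u)) (snd (rep u)) a)"

definition PP :: "(real^4) set \<Rightarrow> (real^4) set \<Rightarrow> (real^4) simplex1 list" where
  "PP u a = (if u = a then [] else [(ccone u a, a, u)])"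

lemma rep_ok:
  assumes "u \<in> double_cones"
  shows "fst (rep u) \<in> poincare_group" "snd (rep u) > 0" "u = fst (rep u) ` std_double_cone (snd (rep u))"
proof -
  have ex: "\<exists>sR. fst sR \<in> poincare_group \<and> snd sR > 0 \<and> u = fst sR ` std_double_cone (snd sR)"
    using assms by (auto simp: double_cones_def)
  have "fst (rep u) \<in> poincare_group \<and> snd (rep u) > 0 \<and> u = fst (rep u) ` std_double_cone (snd (rep u))"
    unfolding rep_def by (rule someI_ex[OF ex])
  then show "fst (rep u) \<in> poincare_group" "snd (rep u) > 0" "u = fst (rep u) ` std_double_cone (snd (rep u))"
    by auto
qed

lemma K_closed:
  assumes "u \<in> double_cones" "t \<in> poincare_group"
  shows "t ` u \<in> double_cones"
proof -
  obtain s R where "s \<in> poincare_group" "R > 0" "u = s ` std_double_cone R"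
    using assms(1) by (auto simp: double_cones_def)
  then have "t ` u = (t \<circ> s) ` std_double_cone R" "t \<circ> s \<in> poincare_group"
    using PG_comp[OF assms(2)] by (auto simp: image_comp)
  then show ?thesis using \<open>R > 0\<close> unfolding double_cones_def by blast
qed

lemma K_ne: "a \<in> double_cones \<Longrightarrow> a \<noteq> {}"
  using std_zero by (auto simp: double_cones_def)

lemma set_ne_bdd:
  assumes s: "s \<in> poincare_group" and R: "R > 0" and a: "a \<in> double_cones"
  shows "{m. a \<subseteq> s ` std_double_cone (R*m)} \<noteq> {}" "bdd_below {m. a \<subseteq> s ` std_double_cone (R*m)}"
    "\<And>m. a \<subseteq> s ` std_double_cone (R*m) \<Longrightarrow> m > 0"
proof -
  show pos: "\<And>m. a \<subseteq> s ` std_double_cone (R*m) \<Longrightarrow> m > 0"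
  proof (rule ccontr)
    fix m assume "a \<subseteq> s ` std_double_cone (R*m)" "\<not> m > 0"
    then have "R*m \<le> 0" using R by (simp add: mult_nonneg_nonpos)
    then have "std_double_cone (R*m) = {}" by (rule std_empty)
    then show False using \<open>a \<subseteq> s ` std_double_cone (R*m)\<close> K_ne[OF a] by simp
  qed
  show "bdd_below {m. a \<subseteq> s ` std_double_cone (R*m)}"
  proof (rule bdd_belowI)
    fix m assume "m \<in> {m. a \<subseteq> s ` std_double_cone (R*m)}"
    then have "m > 0" using pos by simp
    then show "0 \<le> m" by simp
  qed
  obtain L c where L: "proper_orthochronous_lorentz L" "s = (\<lambda>p. L *v p + c)" using PG_elim[OF s] by blast
  define Li where "Li = mink_metric ** transpose L ** mink_metric"
  have LLi: "L ** Li = mat 1" using lor_inv(2)[OF L(1)] by (simp add: Li_def)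
  obtain s2 R2 where a2: "s2 \<in> poincare_group" "a = s2 ` std_double_cone R2"
    using a unfolding double_cones_def by blast
  obtain L2 c2 where L2: "s2 = (\<lambda>p. L2 *v p + c2)" using PG_elim[OF a2(1)] by blast
  have ba: "bounded a" unfolding a2(2) L2 by (rule affine_bounded[OF std_bounded])
  have "bounded ((\<lambda>p. Li *v p + (- (Li *v c))) ` a)" by (rule affine_bounded[OF ba])
  then obtain B where B: "\<forall>x\<in>(\<lambda>p. Li *v p + (- (Li *v c))) ` a. norm x \<le> B" using bounded_iff by blast
  define m where "m = (2 * \<bar>B\<bar> + 1) / R"
  have "a \<subseteq> s ` std_double_cone (R*m)"
  proof
    fix y assume y: "y \<in> a"
    define x where "x = Li *v y + (- (Li *v c))"
    have "x \<in> (\<lambda>p. Li *v p + (- (Li *v c))) ` a" using y unfolding x_def by blast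
    then have "norm x \<le> B" using B by blast
    then have nx: "norm x \<le> \<bar>B\<bar>" by linarith
    have "2*\<bar>B\<bar> < R*m" using R by (simp add: m_def)
    then have "x \<in> std_double_cone (R*m)" by (rule cball_std[OF nx])
    moreover have "s x = y" unfolding L(2) x_def
      by (simp add: mv_add mv_neg mv_diff matrix_vector_mul_assoc LLi)
    ultimately show "y \<in> s ` std_double_cone (R*m)" by blast
  qed
  then show "{m. a \<subseteq> s ` std_double_cone (R*m)} \<noteq> {}" by blast
qed

lemma n41: "(2::4) \<noteq> 1" "(3::4) \<noteq> 1" "(4::4) \<noteq> 1" by simp_all

lemma axis_pt: "(\<chi> i. if i = 1 then r else (0::real)) \<in> std_double_cone R \<longleftrightarrow> \<bar>r\<bar> < R"
  by (simp add: std_double_cone_def sn_expl n41)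

lemma muf_props:
  assumes s: "s \<in> poincare_group" and R: "R > 0" and a: "a \<in> double_cones"
  shows "muf s R a \<ge> 2" "a \<subseteq> s ` std_double_cone (R * muf s R a)" "a \<noteq> s ` std_double_cone (R * muf s R a)"
proof -
  let ?S = "{m. a \<subseteq> s ` std_double_cone (R*m)}"
  note ne = set_ne_bdd[OF s R a]
  define M where "M = muf s R a"
  show "muf s R a \<ge> 2" unfolding muf_def by simp
  have "Inf ?S < M" unfolding muf_def M_def by simp
  then obtain m0 where m0: "m0 \<in> ?S" "m0 < M" using cInf_less_iff[OF ne(1) ne(2)] by blast
  have am0: "a \<subseteq> s ` std_double_cone (R*m0)" using m0(1) by simp
  have m0p: "m0 > 0" using ne(3)[OF am0] .
  have "std_double_cone (R*m0) \<subseteq> std_double_cone (R * M)"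
    using m0(2) R by (intro std_mono) simp
  then have "s ` std_double_cone (R*m0) \<subseteq> s ` std_double_cone (R * M)" by (rule image_mono)
  then show "a \<subseteq> s ` std_double_cone (R * muf s R a)" using am0 unfolding M_def by (rule order_trans[rotated])
  have inj: "inj s" using PG_inj[OF s] .
  show "a \<noteq> s ` std_double_cone (R * muf s R a)"
  proof
    assume eq: "a = s ` std_double_cone (R * muf s R a)"
    define p :: "real^4" where "p = (\<chi> i. if i = 1 then R*m0 else (0::real))"
    have "\<bar>R*m0\<bar> < R * M" using R m0p m0(2) by simp
    then have "p \<in> std_double_cone (R * M)" unfolding p_def axis_pt .
    then have "s p \<in> a" using eq unfolding M_def by (rule_tac ssubst[OF eq]) (rule imageI)
    then have "s p \<in> s ` std_double_cone (R*m0)" using am0 by (rule subsetD[rotated])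
    then have "p \<in> std_double_cone (R*m0)" by (simp only: inj_image_mem_iff[OF inj])
    then show False unfolding p_def axis_pt by simp
  qed
qed

lemma u_proper:
  assumes s: "s \<in> poincare_group" and R: "R > 0" and m: "m \<ge> 2"
  shows "s ` std_double_cone R \<subseteq> s ` std_double_cone (R*m)" "s ` std_double_cone R \<noteq> s ` std_double_cone (R*m)"
proof -
  show "s ` std_double_cone R \<subseteq> s ` std_double_cone (R*m)" using R m by (intro image_mono std_mono) simp
  have inj: "inj s" using PG_inj[OF s] .
  show "s ` std_double_cone R \<noteq> s ` std_double_cone (R*m)"
  proof
    assume eq: "s ` std_double_cone R = s ` std_double_cone (R*m)"
    define p :: "real^4" where "p = (\<chi> i. if i = 1 then R else (0::real))"
    have "\<bar>R\<bar> < R*m" using R m by simp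
    then have "p \<in> std_double_cone (R*m)" unfolding p_def axis_pt .
    then have "s p \<in> s ` std_double_cone (R*m)" by (rule imageI)
    then have "s p \<in> s ` std_double_cone R" unfolding eq .
    then have "p \<in> std_double_cone R" by (simp only: inj_image_mem_iff[OF inj])
    then show False unfolding p_def axis_pt by simp
  qed
qed

lemma ccone_props:
  assumes u: "u \<in> double_cones" and a: "a \<in> double_cones"
  shows "ccone u a \<in> double_cones" "a \<subseteq> ccone u a" "u \<subseteq> ccone u a" "a \<noteq> ccone u a" "ccone u a \<noteq> u"
proof -
  note r = rep_ok[OF u]
  define s where "s = fst (rep u)"
  define R where "R = snd (rep u)"
  have s: "s \<in> poincare_group" "R > 0" using r(1,2) by (simp_all add: s_def R_def)
  have ue: "u = s ` std_double_cone R" unfolding s_def R_def by (rule r(3))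
  have cc: "ccone u a = s ` std_double_cone (R * muf s R a)" unfolding ccone_def s_def R_def ..
  note mp = muf_props[OF s(1) s(2) a]
  have "R * muf s R a > 0" using s(2) mp(1) by simp
  then have "\<exists>s' R'. ccone u a = s' ` std_double_cone R' \<and> s' \<in> poincare_group \<and> R' > 0"
    using s(1) unfolding cc by blast
  then show "ccone u a \<in> double_cones" unfolding double_cones_def by simp
  show "a \<subseteq> ccone u a" "a \<noteq> ccone u a" unfolding cc using mp(2) mp(3) by blast+
  note up = u_proper[OF s(1) s(2) mp(1)]
  show "u \<subseteq> ccone u a" unfolding cc by (subst ue) (rule up(1))
  show "ccone u a \<noteq> u" unfolding cc by (subst ue) (rule not_sym[OF up(2)])
qed

lemma ccone_cov:
  assumes u: "u \<in> double_cones" and a: "a \<in> double_cones" and t: "t \<in> poincare_group"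
  shows "ccone (t ` u) (t ` a) = t ` ccone u a"
proof -
  note r = rep_ok[OF u]
  note r' = rep_ok[OF K_closed[OF u t]]
  define s where "s = fst (rep u)"
  define R where "R = snd (rep u)"
  define s' where "s' = fst (rep (t ` u))"
  define R' where "R' = snd (rep (t ` u))"
  have s: "s \<in> poincare_group" "R > 0" "u = s ` std_double_cone R"
    unfolding s_def R_def by (rule r(1), rule r(2), rule r(3))
  have s': "s' \<in> poincare_group" "R' > 0" "t ` u = s' ` std_double_cone R'"
    unfolding s'_def R'_def by (rule r'(1), rule r'(2), rule r'(3))
  have ts: "t \<circ> s \<in> poincare_group" using PG_comp[OF t s(1)] .
  have "(t \<circ> s) ` std_double_cone R = t ` (s ` std_double_cone R)" by (rule image_comp[symmetric])
  also have "\<dots> = t ` u" by (simp only: s(3)[symmetric])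
  also have "\<dots> = s' ` std_double_cone R'" by (rule s'(3))
  finally have eq0: "(t \<circ> s) ` std_double_cone R = s' ` std_double_cone R'" .
  have key: "s' ` std_double_cone (R'*m) = t ` s ` std_double_cone (R*m)" if "m > 0" for m
    using Rep[OF ts s'(1) s(2) eq0 that] by (simp add: image_comp)
  have injt: "inj t" using PG_inj[OF t] .
  have sets: "{m. t ` a \<subseteq> s' ` std_double_cone (R'*m)} = {m. a \<subseteq> s ` std_double_cone (R*m)}"
  proof (rule Collect_cong)
    fix m show "t ` a \<subseteq> s' ` std_double_cone (R'*m) \<longleftrightarrow> a \<subseteq> s ` std_double_cone (R*m)"
    proof (cases "m > 0")
      case True
      then show ?thesis using key[OF True] injt by (simp add: inj_image_subset_iff)
    next
      case False
      then have "R*m \<le> 0" "R'*m \<le> 0" using s(2) s'(2) by (auto simp: mult_nonneg_nonpos)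
      then have "std_double_cone (R*m) = {}" "std_double_cone (R'*m) = {}" by (simp_all add: std_empty)
      then show ?thesis using K_ne[OF a] by simp
    qed
  qed
  have mu: "muf s' R' (t ` a) = muf s R a" unfolding muf_def sets ..
  have mpos: "muf s R a > 0" using muf_props(1)[OF s(1) s(2) a] by simp
  show ?thesis unfolding ccone_def s_def[symmetric] R_def[symmetric] s'_def[symmetric] R'_def[symmetric] mu
    using key[OF mpos] .
qed

lemma part1: "has_covariant_pfs double_cones poincare_group"
  unfolding has_covariant_pfs_def
proof (intro exI[of _ PP])
  show "covariant_pfs double_cones poincare_group PP"
    unfolding covariant_pfs_def
  proof (intro conjI ballI)
    fix u a assume u: "u \<in> double_cones" and a: "a \<in> double_cones"
    show "is_path double_cones u a (PP u a)"
    proof (cases "u = a")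
      case True then show ?thesis by (simp add: PP_def is_path_def)
    next
      case False
      note cp = ccone_props[OF u a]
      have "(ccone u a, a, u) \<in> T1 double_cones"
        unfolding T1_def supp1_def bd0_def bd1_def using cp u a by simp
      then show ?thesis using False
        by (simp add: PP_def is_path_def supp1_def bd0_def bd1_def)
    qed
  next
    fix u assume "u \<in> double_cones"
    show "FK_eq (PP u u) []" by (simp add: PP_def FK_eq_def)
  next
    fix a x s assume a: "a \<in> double_cones" and x: "x \<in> double_cones" and s: "s \<in> poincare_group"
    have "map (act1 s) (PP a x) = PP (s ` a) (s ` x)"
    proof (cases "a = x")
      case True then show ?thesis by (simp add: PP_def)
    next
      case False
      then have "s ` a \<noteq> s ` x" using PG_inj[OF s] by (simp add: inj_image_eq_iff)
      then show ?thesis using False ccone_cov[OF a x s]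
        by (simp add: PP_def act1_def supp1_def bd0_def bd1_def)
    qed
    then show "FK_eq (map (act1 s) (PP a x)) (PP (s ` a) (s ` x))" by (simp add: FK_eq_def)
  qed
qed




section \<open>Free reduction\<close>

lemma opp_opp[simp]: "opp1 (opp1 b) = b"
  by (cases b) (simp add: opp1_def supp1_def bd0_def bd1_def)
lemma bd0_opp[simp]: "bd0 (opp1 b) = bd1 b" by (simp add: opp1_def bd0_def bd1_def)
lemma bd1_opp[simp]: "bd1 (opp1 b) = bd0 b" by (simp add: opp1_def bd0_def bd1_def)

definition stp :: "'a simplex1 \<Rightarrow> 'a simplex1 list \<Rightarrow> 'a simplex1 list" where
  "stp b st = (case st of [] \<Rightarrow> [b] | c # r \<Rightarrow> if b = opp1 c then r else b # st)"

definition NF :: "'a simplex1 list \<Rightarrow> 'a simplex1 list" where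
  "NF w = foldl (\<lambda>st b. stp b st) [] w"

fun redst :: "'a simplex1 list \<Rightarrow> bool" where
  "redst [] = True"
| "redst [c] = True"
| "redst (c # d # r) = (c \<noteq> opp1 d \<and> redst (d # r))"

lemma redst_stp: "redst st \<Longrightarrow> redst (stp b st)"
  by (cases st rule: redst.cases) (auto simp: stp_def)

lemma stp_cancel: "redst st \<Longrightarrow> stp (opp1 b) (stp b st) = st"
proof (cases st rule: redst.cases)
  case 1 then show ?thesis by (simp add: stp_def)
next
  case (2 c) then show ?thesis by (auto simp: stp_def)
next
  case (3 c d r)
  assume "redst st"
  then show ?thesis using 3 by (auto simp: stp_def)
qed

lemma redst_foldl: "redst st \<Longrightarrow> redst (foldl (\<lambda>st b. stp b st) st w)"
  by (induction w arbitrary: st) (auto simp: redst_stp)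

lemma NF_cancel: "cancel1 xs ys \<Longrightarrow> NF xs = NF ys"
proof -
  assume "cancel1 xs ys"
  then obtain u b v where xs: "xs = u @ [b, opp1 b] @ v" and ys: "ys = u @ v" by (auto simp: cancel1_def)
  have r: "redst (foldl (\<lambda>st b. stp b st) [] u)" by (rule redst_foldl) simp
  show ?thesis unfolding NF_def xs ys using stp_cancel[OF r, of b] by simp
qed

lemma NF_FK: "FK_eq xs ys \<Longrightarrow> NF xs = NF ys"
  unfolding FK_eq_def
proof (induction rule: equivclp_induct)
  case base then show ?case by simp
next
  case (step y z)
  then show ?case using NF_cancel by metis
qed

lemma set_stp: "set (stp b st) \<subseteq> insert b (set st)"
  by (auto simp: stp_def split: list.splits)

lemma set_foldl: "set (foldl (\<lambda>st b. stp b st) st w) \<subseteq> set st \<union> set w"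
proof (induction w arbitrary: st)
  case Nil then show ?case by simp
next
  case (Cons b w) then show ?case using set_stp[of b st] by fastforce
qed

lemma set_NF: "set (NF w) \<subseteq> set w"
  unfolding NF_def using set_foldl[of "[]" w] by simp

lemma stp_map:
  assumes inj: "inj_on f D" and opp: "\<And>b. f (opp1 b) = opp1 (f b)" and oD: "\<And>b. b \<in> D \<Longrightarrow> opp1 b \<in> D"
    and b: "b \<in> D" and st: "set st \<subseteq> D"
  shows "stp (f b) (map f st) = map f (stp b st)"
proof (cases st)
  case Nil then show ?thesis by (simp add: stp_def)
next
  case (Cons c r)
  have cD: "c \<in> D" using st Cons by simp
  have "f b = opp1 (f c) \<longleftrightarrow> b = opp1 c"
    using inj_on_eq_iff[OF inj b oD[OF cD]] opp[of c] by simp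
  then show ?thesis using Cons by (simp add: stp_def)
qed

lemma foldl_map:
  assumes inj: "inj_on f D" and opp: "\<And>b. f (opp1 b) = opp1 (f b)" and oD: "\<And>b. b \<in> D \<Longrightarrow> opp1 b \<in> D"
  shows "set st \<subseteq> D \<Longrightarrow> set w \<subseteq> D \<Longrightarrow>
    foldl (\<lambda>st b. stp b st) (map f st) (map f w) = map f (foldl (\<lambda>st b. stp b st) st w)"
proof (induction w arbitrary: st)
  case Nil then show ?case by simp
next
  case (Cons b w)
  have "set (stp b st) \<subseteq> D" using set_stp[of b st] Cons.prems by auto
  then show ?case using Cons stp_map[OF inj opp oD, of b st] by simp
qed

lemma NF_map:
  assumes "inj_on f D" "\<And>b. f (opp1 b) = opp1 (f b)" "\<And>b. b \<in> D \<Longrightarrow> opp1 b \<in> D" "set w \<subseteq> D"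
  shows "NF (map f w) = map f (NF w)"
  unfolding NF_def using foldl_map[OF assms(1-3), of "[]" w] assms(4) by simp

section \<open>Paths do not reduce to the empty word\<close>

definition endp :: "'a set \<Rightarrow> 'a simplex1 list \<Rightarrow> 'a set" where
  "endp x st = (case st of [] \<Rightarrow> x | c # r \<Rightarrow> bd0 c)"

fun okst :: "'a set \<Rightarrow> 'a simplex1 list \<Rightarrow> bool" where
  "okst x [] = True"
| "okst x (c # r) = (bd1 c = endp x r \<and> okst x r)"

fun chain :: "'a set \<Rightarrow> 'a simplex1 list \<Rightarrow> bool" where
  "chain x [] = True"
| "chain x (b # bs) = (bd1 b = x \<and> chain (bd0 b) bs)"

fun endc :: "'a set \<Rightarrow> 'a simplex1 list \<Rightarrow> 'a set" where
  "endc x [] = x"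
| "endc x (b # bs) = endc (bd0 b) bs"

lemma okst_stp:
  assumes "okst x st" "bd1 b = endp x st"
  shows "okst x (stp b st) \<and> endp x (stp b st) = bd0 b"
proof (cases st)
  case Nil then show ?thesis using assms by (simp add: stp_def endp_def)
next
  case (Cons c r)
  then show ?thesis using assms by (auto simp: stp_def endp_def)
qed

lemma okst_foldl:
  "okst x st \<Longrightarrow> chain (endp x st) w \<Longrightarrow>
   okst x (foldl (\<lambda>st b. stp b st) st w) \<and> endp x (foldl (\<lambda>st b. stp b st) st w) = endc (endp x st) w"
proof (induction w arbitrary: st)
  case Nil then show ?case by simp
next
  case (Cons b w)
  have "bd1 b = endp x st" using Cons.prems by simp
  then have 1: "okst x (stp b st)" "endp x (stp b st) = bd0 b" using okst_stp Cons.prems(1) by blast+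
  have "chain (endp x (stp b st)) w" using Cons.prems(2) 1(2) by simp
  then show ?case using Cons.IH[OF 1(1)] 1(2) by simp
qed

lemma is_path_chain: "is_path K a u p \<Longrightarrow> chain a p \<and> endc a p = u"
proof (induction p arbitrary: a)
  case Nil then show ?case by (simp add: is_path_def)
next
  case (Cons b bs)
  have b1: "bd1 b = a" using Cons.prems by (simp add: is_path_def)
  have "is_path K (bd0 b) u bs"
  proof (cases bs)
    case Nil then show ?thesis using Cons.prems by (simp add: is_path_def)
  next
    case (Cons c cs)
    have ch: "\<forall>i. Suc i < length (b # bs) \<longrightarrow> bd0 ((b#bs) ! i) = bd1 ((b#bs) ! Suc i)"
      using Cons.prems by (simp add: is_path_def)
    have "bd0 b = bd1 c" using ch[rule_format, of 0] Cons by simp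
    moreover have "\<forall>i. Suc i < length bs \<longrightarrow> bd0 (bs ! i) = bd1 (bs ! Suc i)"
      using ch by (metis Suc_less_eq length_Cons nth_Cons_Suc)
    ultimately show ?thesis using \<open>is_path K a u (b # bs)\<close> Cons by (simp add: is_path_def)
  qed
  then show ?case using Cons.IH b1 by simp
qed

lemma NF_path_ne:
  assumes "is_path K a u p" "a \<noteq> u"
  shows "NF p \<noteq> []"
proof
  assume e: "NF p = []"
  have c: "chain a p" "endc a p = u" using is_path_chain[OF assms(1)] by auto
  have "endp a (NF p) = endc a p"
    using okst_foldl[of a "[]" p] c(1) unfolding NF_def by (simp add: endp_def)
  then show False using e c(2) assms(2) by (simp add: endp_def)
qed




definition aup :: "complex set" where "aup = {z \<in> circle. Im z > 0}"
definition alo :: "complex set" where "alo = {z \<in> circle. Im z < 0}"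
definition cA :: "real \<Rightarrow> real" where "cA m = (m + 1/m)/2"
definition cB :: "real \<Rightarrow> real" where "cB m = (m - 1/m)/2"
definition Dm :: "real \<Rightarrow> complex \<Rightarrow> complex" where
  "Dm m = (\<lambda>z. (of_real (cA m) * z + of_real (cB m)) / (cnj (of_real (cB m)) * z + cnj (of_real (cA m))))"
definition gg :: "complex \<Rightarrow> complex" where "gg z = (1 + z) / (1 - z)"

lemma circ_iff: "z \<in> circle \<longleftrightarrow> (Re z)^2 + (Im z)^2 = 1"
proof -
  have "z \<in> circle \<longleftrightarrow> cmod z = 1" by (simp add: circle_def)
  also have "\<dots> \<longleftrightarrow> (cmod z)^2 = 1^2" using power2_eq_iff_nonneg[of "cmod z" 1] by simp
  finally show ?thesis by (simp add: cmod_power2)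
qed

lemma circ_norm: "z \<in> circle \<Longrightarrow> cmod z = 1" by (simp add: circle_def)

lemma AB:
  assumes "m > 0"
  shows "cA m + cB m = m" "cA m - cB m = 1/m" "cA m > \<bar>cB m\<bar>" "(cA m)^2 - (cB m)^2 = 1"
proof -
  show "cA m + cB m = m" "cA m - cB m = 1/m" by (simp_all add: cA_def cB_def field_simps)
  have "1/m > 0" using assms by simp
  then have "cB m < cA m" "- cB m < cA m" using assms \<open>cA m + cB m = m\<close> \<open>cA m - cB m = 1/m\<close> by linarith+
  then show "cA m > \<bar>cB m\<bar>" by (simp add: abs_less_iff)
  have "(cA m)^2 - (cB m)^2 = (cA m + cB m) * (cA m - cB m)" by (simp add: power2_eq_square algebra_simps)
  then show "(cA m)^2 - (cB m)^2 = 1" using assms \<open>cA m + cB m = m\<close> \<open>cA m - cB m = 1/m\<close> by simp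
qed

lemma Dm_eq: "Dm m z = (of_real (cA m) * z + of_real (cB m)) / (of_real (cB m) * z + of_real (cA m))"
  by (simp add: Dm_def)

lemma Dm_moeb: "m > 0 \<Longrightarrow> Dm m \<in> moebius_group"
  unfolding moebius_group_def Dm_def
  using AB(4)[of m] by (intro CollectI exI[of _ "of_real (cA m)"] exI[of _ "of_real (cB m)"]) simp

lemma den_ne:
  assumes "m > 0" "z \<in> circle"
  shows "of_real (cB m) * z + of_real (cA m) \<noteq> 0"
proof
  assume "of_real (cB m) * z + of_real (cA m) = 0"
  then have "of_real (cB m) * z = - of_real (cA m)" by (simp add: eq_neg_iff_add_eq_0)
  then have "cmod (of_real (cB m) * z) = cmod (of_real (cA m))" by (metis norm_minus_cancel)
  then have "\<bar>cB m\<bar> = \<bar>cA m\<bar>" using circ_norm[OF assms(2)] by (simp add: norm_mult)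
  then show False using AB(3)[OF assms(1)] by simp
qed

lemma Dm_circ:
  assumes "m > 0" "z \<in> circle"
  shows "Dm m z \<in> circle"
proof -
  let ?a = "cA m" and ?b = "cB m"
  let ?n = "of_real ?a * z + of_real ?b" and ?d = "of_real ?b * z + of_real ?a"
  have xy: "(Re z)^2 + (Im z)^2 = 1" using assms(2) circ_iff by blast
  have e1: "(cmod ?n)^2 = (?a * Re z + ?b)^2 + (?a * Im z)^2" unfolding cmod_power2 by simp
  have e2: "(cmod ?d)^2 = (?b * Re z + ?a)^2 + (?b * Im z)^2" unfolding cmod_power2 by simp
  have "(?a * Re z + ?b)^2 + (?a * Im z)^2 - ((?b * Re z + ?a)^2 + (?b * Im z)^2) = (?a^2 - ?b^2) * ((Re z)^2 + (Im z)^2 - 1)"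
    by (simp add: power2_eq_square algebra_simps)
  then have "(cmod ?n)^2 = (cmod ?d)^2" using xy e1 e2 by simp
  then have "cmod ?n = cmod ?d" using power2_eq_iff_nonneg norm_ge_zero by blast
  then have "cmod (Dm m z) = 1" using den_ne[OF assms] by (simp add: Dm_eq norm_divide)
  then show ?thesis by (simp add: circle_def)
qed

lemma Dm_Im:
  assumes "m > 0" "z \<in> circle"
  shows "\<exists>k>0. Im (Dm m z) = Im z * k"
proof -
  let ?a = "cA m" and ?b = "cB m"
  let ?n = "of_real ?a * z + of_real ?b" and ?d = "of_real ?b * z + of_real ?a"
  have "(cmod ?d)^2 > 0" using den_ne[OF assms] by simp
  then have dpos: "(Re ?d)^2 + (Im ?d)^2 > 0" by (simp only: cmod_power2)
  have "Im ?n * Re ?d - Re ?n * Im ?d = (?a^2 - ?b^2) * Im z"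
    by (simp add: power2_eq_square algebra_simps)
  then have "Im (Dm m z) = Im z * (1 / ((Re ?d)^2 + (Im ?d)^2))"
    using AB(4)[OF assms(1)] unfolding Dm_eq Im_divide by simp
  then show ?thesis using dpos by (intro exI[of _ "1 / ((Re ?d)^2 + (Im ?d)^2)"]) simp
qed

lemma Dm_up: "m > 0 \<Longrightarrow> z \<in> aup \<Longrightarrow> Dm m z \<in> aup"
  using Dm_Im[of m z] Dm_circ[of m z] by (auto simp: aup_def)
lemma Dm_lo: "m > 0 \<Longrightarrow> z \<in> alo \<Longrightarrow> Dm m z \<in> alo"
  using Dm_Im[of m z] Dm_circ[of m z] by (auto simp: alo_def mult_neg_pos)

lemma gg_circ:
  assumes "z \<in> circle" "z \<noteq> 1"
  shows "gg z = \<i> * of_real (2 * Im z / ((1 - Re z)^2 + (Im z)^2))"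
proof -
  have xy: "(Re z)^2 + (Im z)^2 = 1" using assms(1) circ_iff by blast
  have re: "Re (gg z) = 0"
  proof -
    have "(1 + Re z) * (1 - Re z) + Im z * (- Im z) = 1 - ((Re z)^2 + (Im z)^2)"
      by (simp add: power2_eq_square algebra_simps)
    then show ?thesis using xy by (simp add: gg_def Re_divide)
  qed
  have im: "Im (gg z) = 2 * Im z / ((1 - Re z)^2 + (Im z)^2)"
  proof -
    have "Im z * (1 - Re z) + (1 + Re z) * Im z = 2 * Im z" by (simp add: algebra_simps)
    then show ?thesis by (simp add: gg_def Im_divide)
  qed
  show ?thesis using re im by (simp add: complex_eq_iff)
qed

lemma den1_pos: "z \<noteq> 1 \<Longrightarrow> (1 - Re z)^2 + (Im z)^2 > 0"
proof (rule ccontr)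
  assume "z \<noteq> 1" "\<not> (1 - Re z)^2 + (Im z)^2 > 0"
  then have "(1 - Re z)^2 = 0" "(Im z)^2 = 0"
    by (smt (verit) zero_le_power2)+
  then have "Re z = 1" "Im z = 0" by auto
  then show False using \<open>z \<noteq> 1\<close> by (simp add: complex_eq_iff)
qed

lemma gg_inj: "w \<noteq> 1 \<Longrightarrow> w' \<noteq> 1 \<Longrightarrow> gg w = gg w' \<Longrightarrow> w = w'"
proof -
  assume w: "w \<noteq> 1" "w' \<noteq> 1" "gg w = gg w'"
  have "1 - w \<noteq> 0" "1 - w' \<noteq> 0" using w by auto
  then have "(1 + w) * (1 - w') = (1 + w') * (1 - w)" using w(3) by (simp add: gg_def field_simps)
  then have "2 * w = 2 * w'" by (simp add: algebra_simps)
  then show "w = w'" by simp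
qed

lemma gfrac: "(d::complex) \<noteq> 0 \<Longrightarrow> d - n \<noteq> 0 \<Longrightarrow> (1 + n/d) / (1 - n/d) = (d + n) / (d - n)"
proof -
  assume d: "d \<noteq> 0" and dn: "d - n \<noteq> 0"
  have 1: "1 + n/d = (d + n)/d" using d by (simp add: add_divide_distrib)
  have 2: "1 - n/d = (d - n)/d" using d by (simp add: diff_divide_distrib)
  show ?thesis unfolding 1 2 using d dn by simp
qed

lemma gg_Dm:
  assumes m: "m > 0" and z: "z \<in> circle" "z \<noteq> 1"
  shows "Dm m z \<noteq> 1" "gg (Dm m z) = of_real (m^2) * gg z"
proof -
  let ?a = "cA m" and ?b = "cB m"
  let ?n = "of_real ?a * z + of_real ?b" and ?d = "of_real ?b * z + of_real ?a"
  have d: "?d \<noteq> 0" using den_ne[OF m z(1)] .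
  have dm: "?d - ?n = of_real (?a - ?b) * (1 - z)" by (simp add: algebra_simps)
  have dp: "?d + ?n = of_real (?a + ?b) * (1 + z)" by (simp add: algebra_simps)
  have ab: "?a - ?b = 1/m" "?a + ?b = m" using AB[OF m] by auto
  have dmn: "?d - ?n \<noteq> 0" unfolding dm ab using m z(2) by simp
  show "Dm m z \<noteq> 1"
  proof
    assume "Dm m z = 1"
    then have "?n = ?d" using d by (simp add: Dm_eq divide_eq_1_iff)
    then show False using dmn by simp
  qed
  have "gg (Dm m z) = (?d + ?n) / (?d - ?n)"
    unfolding gg_def Dm_eq by (rule gfrac[OF d dmn])
  also have "\<dots> = (of_real m * (1 + z)) / (of_real (1/m) * (1 - z))" unfolding dm dp ab ..
  also have "\<dots> = of_real (m^2) * gg z" using m z(2) by (simp add: gg_def field_simps power2_eq_square)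
  finally show "gg (Dm m z) = of_real (m^2) * gg z" .
qed

lemma Dm_one: "m > 0 \<Longrightarrow> Dm m 1 = 1"
proof -
  assume m: "m > 0"
  have "of_real (cA m) + of_real (cB m) = (of_real m :: complex)" using AB(1)[OF m] by (metis of_real_add)
  then have "of_real (cA m) + of_real (cB m) \<noteq> (0::complex)" using m by simp
  then show ?thesis by (simp add: Dm_eq add.commute)
qed

lemma Dm_trans:
  assumes z: "z \<in> circle" "z \<noteq> 1" and z': "z' \<in> circle" "z' \<noteq> 1" and s: "Im z * Im z' > 0"
  shows "\<exists>m>0. Dm m z = z'"
proof -
  define q where "q = 2 * Im z / ((1 - Re z)^2 + (Im z)^2)"
  define q' where "q' = 2 * Im z' / ((1 - Re z')^2 + (Im z')^2)"
  have p1: "(1 - Re z)^2 + (Im z)^2 > 0" "(1 - Re z')^2 + (Im z')^2 > 0" using den1_pos z(2) z'(2) by auto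
  have "q * q' > 0"
  proof -
    have "q * q' = 4 * (Im z * Im z') / (((1 - Re z)^2 + (Im z)^2) * ((1 - Re z')^2 + (Im z')^2))"
      by (simp add: q_def q'_def)
    then show ?thesis using s p1 by simp
  qed
  then have qq: "q' / q > 0" "q \<noteq> 0" by (auto simp: zero_less_mult_iff zero_less_divide_iff)
  define m where "m = sqrt (q' / q)"
  have m: "m > 0" "m^2 = q'/q" using qq by (auto simp: m_def)
  have "gg (Dm m z) = of_real (m^2) * gg z" using gg_Dm(2)[OF m(1) z] .
  also have "\<dots> = of_real (q'/q) * (\<i> * of_real q)" using gg_circ[OF z] m(2) by (simp add: q_def)
  also have "\<dots> = \<i> * of_real q'" using qq(2) by (simp add: field_simps)
  also have "\<dots> = gg z'" using gg_circ[OF z'] by (simp add: q'_def)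
  finally have "Dm m z = z'" using gg_inj gg_Dm(1)[OF m(1) z] z'(2) by blast
  then show ?thesis using m(1) by blast
qed

lemma Dm_inv:
  assumes m: "m > 0" and z: "z \<in> circle" "z \<noteq> 1"
  shows "Dm m (Dm (1/m) z) = z"
proof -
  have m': "1/m > 0" using m by simp
  have w: "Dm (1/m) z \<in> circle" "Dm (1/m) z \<noteq> 1" using Dm_circ[OF m' z(1)] gg_Dm(1)[OF m' z] by auto
  have "gg (Dm m (Dm (1/m) z)) = of_real (m^2) * (of_real ((1/m)^2) * gg z)"
    using gg_Dm(2)[OF m w] gg_Dm(2)[OF m' z] by simp
  also have "\<dots> = gg z" using m by (simp add: field_simps power2_eq_square)
  finally show ?thesis using gg_inj gg_Dm(1)[OF m w] z(2) by blast
qed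

lemma up_ne1: "z \<in> aup \<Longrightarrow> z \<noteq> 1" by (auto simp: aup_def)
lemma lo_ne1: "z \<in> alo \<Longrightarrow> z \<noteq> 1" by (auto simp: alo_def)

lemma Dm_aup: "m > 0 \<Longrightarrow> Dm m ` aup = aup"
proof
  assume m: "m > 0"
  show "Dm m ` aup \<subseteq> aup" using Dm_up[OF m] by blast
  show "aup \<subseteq> Dm m ` aup"
  proof
    fix z assume z: "z \<in> aup"
    have zc: "z \<in> circle" "z \<noteq> 1" using z up_ne1 by (auto simp: aup_def)
    have "Dm (1/m) z \<in> aup" using Dm_up[of "1/m" z] m z by simp
    moreover have "Dm m (Dm (1/m) z) = z" using Dm_inv[OF m zc] .
    ultimately show "z \<in> Dm m ` aup" by (metis image_eqI)
  qed
qed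

lemma Dm_alo: "m > 0 \<Longrightarrow> Dm m ` alo = alo"
proof
  assume m: "m > 0"
  show "Dm m ` alo \<subseteq> alo" using Dm_lo[OF m] by blast
  show "alo \<subseteq> Dm m ` alo"
  proof
    fix z assume z: "z \<in> alo"
    have zc: "z \<in> circle" "z \<noteq> 1" using z lo_ne1 by (auto simp: alo_def)
    have "Dm (1/m) z \<in> alo" using Dm_lo[of "1/m" z] m z by simp
    moreover have "Dm m (Dm (1/m) z) = z" using Dm_inv[OF m zc] .
    ultimately show "z \<in> Dm m ` alo" by (metis image_eqI)
  qed
qed

lemma Dm_inj: assumes m: "m > 0" shows "inj_on (Dm m) circle"
proof (rule inj_onI)
  fix z1 z2 assume z: "z1 \<in> circle" "z2 \<in> circle" "Dm m z1 = Dm m z2"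
  show "z1 = z2"
  proof (cases "z1 = 1 \<or> z2 = 1")
    case True
    then show ?thesis using z gg_Dm(1)[OF m] Dm_one[OF m] by metis
  next
    case False
    then have "of_real (m^2) * gg z1 = of_real (m^2) * gg z2"
      using gg_Dm(2)[OF m] z by metis
    then have "gg z1 = gg z2" using m by simp
    then show ?thesis using gg_inj False by blast
  qed
qed




lemma near1: "(e::real) > 0 \<Longrightarrow> \<exists>u v::real. u^2 + v^2 = 1 \<and> v > 0 \<and> \<bar>u - 1\<bar> + v < e"
proof -
  assume e: "e > 0"
  define s where "s = min (1/2) (e/8)"
  have s: "s > 0" "s \<le> 1/2" "s \<le> e/8" using e by (auto simp: s_def)
  define u where "u = (1 - s^2)/(1 + s^2)"
  define q where "q = 2 * s/(1 + s^2)"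
  have d: "1 + s^2 > 0" by (simp add: add_pos_nonneg)
  have "u^2 + q^2 = ((1 - s^2)^2 + (2 * s)^2) / (1 + s^2)^2"
    by (simp add: u_def q_def power_divide add_divide_distrib)
  also have "(1 - s^2)^2 + (2 * s)^2 = (1 + s^2)^2" by (simp add: power2_eq_square algebra_simps)
  finally have 1: "u^2 + q^2 = 1" using d by simp
  have v: "q > 0" "q \<le> 2 * s" using s d by (auto simp: q_def divide_le_eq)
  have "u - 1 = - (2 * s^2) / (1 + s^2)" using d by (simp add: u_def field_simps)
  then have "\<bar>u - 1\<bar> = 2 * s^2 / (1 + s^2)" by simp
  also have "\<dots> \<le> 2 * s^2"
  proof -
    have "0 \<le> s^2 * s^2" by simp
    then show ?thesis using d by (simp add: divide_le_eq distrib_left)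
  qed
  also have "\<dots> \<le> s" using s by (simp add: power2_eq_square)
  finally have "\<bar>u - 1\<bar> + q < e" using v s by linarith
  then show ?thesis using 1 v by blast
qed

lemma cplx_circ: "u^2 + v^2 = 1 \<Longrightarrow> Complex u v \<in> circle"
  by (simp add: circ_iff)

lemma near_pts:
  assumes "e > 0"
  shows "\<exists>w\<in>aup. dist w 1 < e" "\<exists>w\<in>alo. dist w 1 < e"
        "\<exists>w\<in>aup. dist w (-1) < e" "\<exists>w\<in>alo. dist w (-1) < e"
proof -
  obtain u v where uv: "u^2 + v^2 = 1" "v > 0" "\<bar>u - 1\<bar> + v < e" using near1[OF assms] by blast
  have c1: "Complex u v \<in> aup" "Complex u (-v) \<in> alo" "Complex (-u) v \<in> aup" "Complex (-u) (-v) \<in> alo"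
    using uv by (auto simp: aup_def alo_def circ_iff)
  have "dist (Complex u v) 1 \<le> \<bar>u - 1\<bar> + \<bar>v\<bar>" unfolding dist_norm using cmod_le[of "Complex u v - 1"] by simp
  then show "\<exists>w\<in>aup. dist w 1 < e" using c1 uv by (intro bexI[of _ "Complex u v"]) auto
  have "dist (Complex u (-v)) 1 \<le> \<bar>u - 1\<bar> + \<bar>v\<bar>" unfolding dist_norm using cmod_le[of "Complex u (-v) - 1"] by simp
  then show "\<exists>w\<in>alo. dist w 1 < e" using c1 uv by (intro bexI[of _ "Complex u (-v)"]) auto
  have "dist (Complex (-u) v) (-1) \<le> \<bar>u - 1\<bar> + \<bar>v\<bar>" unfolding dist_norm using cmod_le[of "Complex (-u) v + 1"]
    by (simp add: abs_minus_commute)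
  then show "\<exists>w\<in>aup. dist w (-1) < e" using c1 uv by (intro bexI[of _ "Complex (-u) v"]) auto
  have "dist (Complex (-u) (-v)) (-1) \<le> \<bar>u - 1\<bar> + \<bar>v\<bar>" unfolding dist_norm using cmod_le[of "Complex (-u) (-v) + 1"]
    by (simp add: abs_minus_commute)
  then show "\<exists>w\<in>alo. dist w (-1) < e" using c1 uv by (intro bexI[of _ "Complex (-u) (-v)"]) auto
qed

lemma pm1: "z \<in> circle \<Longrightarrow> Im z = 0 \<Longrightarrow> z = 1 \<or> z = -1"
proof -
  assume z: "z \<in> circle" "Im z = 0"
  then have "(Re z)^2 = 1" using circ_iff by auto
  then have "Re z = 1 \<or> Re z = -1" by (simp add: power2_eq_1_iff)
  then show ?thesis using z(2) by (auto simp: complex_eq_iff)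
qed

lemma open_meets:
  assumes I: "I \<in> circle_intervals" and z: "z \<in> I" "Im z = 0"
  shows "(\<exists>w\<in>I. w \<in> aup) \<and> (\<exists>w\<in>I. w \<in> alo)"
proof -
  have op: "openin (top_of_set circle) I" and sub: "I \<subseteq> circle" using I by (auto simp: circle_intervals_def)
  obtain e where e: "e > 0" "\<forall>x'\<in>circle. dist x' z < e \<longrightarrow> x' \<in> I"
    using op z(1) unfolding openin_euclidean_subtopology_iff by blast
  have zz: "z = 1 \<or> z = -1" using pm1 sub z by blast
  have up: "aup \<subseteq> circle" "alo \<subseteq> circle" by (auto simp: aup_def alo_def)
  show ?thesis
  proof (cases "z = 1")
    case True
    then show ?thesis using near_pts(1,2)[OF e(1)] e(2) up by blast
  next
    case False
    then have "z = -1" using zz by blast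
    then show ?thesis using near_pts(3,4)[OF e(1)] e(2) up by blast
  qed
qed

lemma closure_full:
  assumes "aup \<subseteq> I" "alo \<subseteq> I" "I \<subseteq> circle"
  shows "closure I = circle"
proof
  show "closure I \<subseteq> circle" using assms(3) closure_minimal closed_sphere unfolding circle_def by blast
  show "circle \<subseteq> closure I"
  proof
    fix z assume z: "z \<in> circle"
    show "z \<in> closure I"
    proof (cases "Im z = 0")
      case False
      then have "z \<in> aup \<or> z \<in> alo" using z by (auto simp: aup_def alo_def)
      then show ?thesis using assms closure_subset by blast
    next
      case True
      then have zz: "z = 1 \<or> z = -1" using pm1 z by blast
      show ?thesis unfolding closure_approachable
      proof (intro allI impI)
        fix e :: real assume e: "e > 0"
        show "\<exists>y\<in>I. dist y z < e" using zz near_pts(1,3)[OF e] assms(1) by blast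
      qed
    qed
  qed
qed

lemma orbit:
  assumes inv: "\<forall>m>0. Dm m ` I = I" and sub: "I \<subseteq> circle" and w: "w \<in> I"
  shows "w \<in> aup \<Longrightarrow> aup \<subseteq> I" "w \<in> alo \<Longrightarrow> alo \<subseteq> I"
proof -
  assume wa: "w \<in> aup"
  show "aup \<subseteq> I"
  proof
    fix z assume z: "z \<in> aup"
    have "Im w * Im z > 0" using wa z by (auto simp: aup_def)
    then obtain m where m: "m > 0" "Dm m w = z"
      using Dm_trans[of w z] wa z up_ne1 by (auto simp: aup_def)
    then show "z \<in> I" using inv w by blast
  qed
next
  assume wa: "w \<in> alo"
  show "alo \<subseteq> I"
  proof
    fix z assume z: "z \<in> alo"
    have "Im w * Im z > 0" using wa z by (auto simp: alo_def mult_neg_neg)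
    then obtain m where m: "m > 0" "Dm m w = z"
      using Dm_trans[of w z] wa z lo_ne1 by (auto simp: alo_def)
    then show "z \<in> I" using inv w by blast
  qed
qed

lemma classify:
  assumes I: "I \<in> circle_intervals" and inv: "\<forall>m>0. Dm m ` I = I"
  shows "I = aup \<or> I = alo"
proof -
  have sub: "I \<subseteq> circle" "I \<noteq> {}" "closure I \<noteq> circle" using I by (auto simp: circle_intervals_def)
  have notboth: "\<not> (aup \<subseteq> I \<and> alo \<subseteq> I)" using closure_full sub by blast
  have nz: "\<forall>z\<in>I. Im z \<noteq> 0"
  proof
    fix z assume z: "z \<in> I"
    show "Im z \<noteq> 0"
    proof
      assume "Im z = 0"
      then obtain w1 w2 where "w1 \<in> I" "w1 \<in> aup" "w2 \<in> I" "w2 \<in> alo" using open_meets[OF I z] by blast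
      then show False using orbit[OF inv sub(1)] notboth by blast
    qed
  qed
  obtain z where z: "z \<in> I" using sub(2) by blast
  show ?thesis
  proof (cases "Im z > 0")
    case True
    then have zu: "z \<in> aup" using z sub(1) by (auto simp: aup_def)
    have A: "aup \<subseteq> I" using orbit(1)[OF inv sub(1) z zu] .
    have "I \<subseteq> aup"
    proof
      fix y assume y: "y \<in> I"
      show "y \<in> aup"
      proof (rule ccontr)
        assume "y \<notin> aup"
        then have "y \<in> alo" using y sub(1) nz by (auto simp: aup_def alo_def)
        then have "alo \<subseteq> I" using orbit(2)[OF inv sub(1) y] by blast
        then show False using A notboth by blast
      qed
    qed
    then show ?thesis using A by blast
  next
    case False
    then have zu: "z \<in> alo" using z sub(1) nz by (auto simp: alo_def)
    have A: "alo \<subseteq> I" using orbit(2)[OF inv sub(1) z zu] .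
    have "I \<subseteq> alo"
    proof
      fix y assume y: "y \<in> I"
      show "y \<in> alo"
      proof (rule ccontr)
        assume "y \<notin> alo"
        then have "y \<in> aup" using y sub(1) nz by (auto simp: aup_def alo_def)
        then have "aup \<subseteq> I" using orbit(1)[OF inv sub(1) y] by blast
        then show False using A notboth by blast
      qed
    qed
    then show ?thesis using A by blast
  qed
qed

lemma aup_param: "aup = (\<lambda>t. Complex t (sqrt (1 - t^2))) ` {-1<..<1}"
proof
  show "aup \<subseteq> (\<lambda>t. Complex t (sqrt (1 - t^2))) ` {-1<..<1}"
  proof
    fix z assume z: "z \<in> aup"
    have xy: "(Re z)^2 + (Im z)^2 = 1" "Im z > 0" using z by (auto simp: aup_def circ_iff)
    have "(Re z)^2 < 1" using xy by (smt (verit) zero_less_power2)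
    then have r: "Re z \<in> {-1<..<1}" by (simp add: abs_square_less_1 abs_less_iff)
    have "Im z = sqrt (1 - (Re z)^2)" using xy by (metis add_diff_cancel_left' less_eq_real_def real_sqrt_unique)
    then have "z = Complex (Re z) (sqrt (1 - (Re z)^2))" by (simp add: complex_eq_iff)
    then show "z \<in> (\<lambda>t. Complex t (sqrt (1 - t^2))) ` {-1<..<1}" using r by blast
  qed
  show "(\<lambda>t. Complex t (sqrt (1 - t^2))) ` {-1<..<1} \<subseteq> aup"
  proof
    fix z assume "z \<in> (\<lambda>t. Complex t (sqrt (1 - t^2))) ` {-1<..<1}"
    then obtain t where t: "t \<in> {-1<..<1}" "z = Complex t (sqrt (1 - t^2))" by blast
    have "t^2 < 1" using t(1) by (simp add: abs_square_less_1 abs_less_iff)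
    then show "z \<in> aup" using t(2) by (simp add: aup_def circ_iff)
  qed
qed

lemma alo_param: "alo = (\<lambda>t. Complex t (- sqrt (1 - t^2))) ` {-1<..<1}"
proof
  show "alo \<subseteq> (\<lambda>t. Complex t (- sqrt (1 - t^2))) ` {-1<..<1}"
  proof
    fix z assume z: "z \<in> alo"
    have xy: "(Re z)^2 + (Im z)^2 = 1" "Im z < 0" using z by (auto simp: alo_def circ_iff)
    have "(Re z)^2 < 1" using xy by (smt (verit) zero_less_power2)
    then have r: "Re z \<in> {-1<..<1}" by (simp add: abs_square_less_1 abs_less_iff)
    have "- Im z = sqrt (1 - (Re z)^2)" using xy
      by (metis add_diff_cancel_left' neg_0_less_iff_less power2_minus less_eq_real_def real_sqrt_unique)
    then have "z = Complex (Re z) (- sqrt (1 - (Re z)^2))" by (simp add: complex_eq_iff)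
    then show "z \<in> (\<lambda>t. Complex t (- sqrt (1 - t^2))) ` {-1<..<1}" using r by blast
  qed
  show "(\<lambda>t. Complex t (- sqrt (1 - t^2))) ` {-1<..<1} \<subseteq> alo"
  proof
    fix z assume "z \<in> (\<lambda>t. Complex t (- sqrt (1 - t^2))) ` {-1<..<1}"
    then obtain t where t: "t \<in> {-1<..<1}" "z = Complex t (- sqrt (1 - t^2))" by blast
    have "t^2 < 1" using t(1) by (simp add: abs_square_less_1 abs_less_iff)
    then show "z \<in> alo" using t(2) by (simp add: alo_def circ_iff)
  qed
qed

lemma aup_K: "aup \<in> circle_intervals"
proof -
  have c: "connected aup"
  proof -
    have "continuous_on {-1<..<1} (\<lambda>t. Complex t (sqrt (1 - t^2)))"
      unfolding Complex_eq by (intro continuous_intros)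
    then show ?thesis unfolding aup_param by (rule connected_continuous_image) simp
  qed
  have o: "openin (top_of_set circle) aup"
  proof -
    have "aup = circle \<inter> {z. Im z > 0}" by (auto simp: aup_def)
    then show ?thesis using openin_open_Int[OF open_halfspace_Im_gt] by metis
  qed
  have ne: "\<i> \<in> aup" by (simp add: aup_def circle_def)
  have cl: "closure aup \<subseteq> {z. Im z \<ge> 0}"
    by (rule closure_minimal) (auto simp: aup_def closed_halfspace_Im_ge)
  have "- \<i> \<in> circle" by (simp add: circle_def)
  then have "closure aup \<noteq> circle" using cl by auto
  then show ?thesis using c o ne by (auto simp: circle_intervals_def aup_def)
qed

lemma alo_K: "alo \<in> circle_intervals"
proof -
  have c: "connected alo"
  proof -
    have "continuous_on {-1<..<1} (\<lambda>t. Complex t (- sqrt (1 - t^2)))"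
      unfolding Complex_eq by (intro continuous_intros)
    then show ?thesis unfolding alo_param by (rule connected_continuous_image) simp
  qed
  have o: "openin (top_of_set circle) alo"
  proof -
    have "alo = circle \<inter> {z. Im z < 0}" by (auto simp: alo_def)
    then show ?thesis using openin_open_Int[OF open_halfspace_Im_lt] by metis
  qed
  have ne: "- \<i> \<in> alo" by (simp add: alo_def circle_def)
  have cl: "closure alo \<subseteq> {z. Im z \<le> 0}"
    by (rule closure_minimal) (auto simp: alo_def closed_halfspace_Im_le)
  have "\<i> \<in> circle" by (simp add: circle_def)
  then have "closure alo \<noteq> circle" using cl by auto
  then show ?thesis using c o ne by (auto simp: circle_intervals_def alo_def)
qed

lemma part2: "\<not> has_covariant_pfs circle_intervals moebius_group"
proof
  assume "has_covariant_pfs circle_intervals moebius_group"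
  then obtain P where P: "covariant_pfs circle_intervals moebius_group P"
    by (auto simp: has_covariant_pfs_def)
  define w where "w = P aup alo"
  have path: "is_path circle_intervals aup alo w"
    using P aup_K alo_K by (simp add: covariant_pfs_def w_def)
  have ne: "aup \<noteq> alo"
  proof
    assume "aup = alo"
    moreover have "\<i> \<in> aup" "\<i> \<notin> alo" by (auto simp: aup_def alo_def circle_def)
    ultimately show False by simp
  qed
  define Dom where "Dom = {b :: complex simplex1. supp1 b \<subseteq> circle \<and> bd0 b \<subseteq> circle \<and> bd1 b \<subseteq> circle}"
  have T1D: "T1 circle_intervals \<subseteq> Dom" by (auto simp: T1_def Dom_def circle_intervals_def)
  have wD: "set w \<subseteq> Dom" using path T1D by (auto simp: is_path_def)
  have oD: "\<And>b. b \<in> Dom \<Longrightarrow> opp1 b \<in> Dom" by (auto simp: Dom_def opp1_def supp1_def bd0_def bd1_def)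
  have NFne: "NF w \<noteq> []" using NF_path_ne[OF path ne] .
  define b0 where "b0 = hd (NF w)"
  have b0w: "b0 \<in> set (NF w)" using NFne by (simp add: b0_def)
  have b0T: "b0 \<in> T1 circle_intervals" using b0w set_NF path by (auto simp: is_path_def)
  have fix0: "Dm m ` supp1 b0 = supp1 b0 \<and> Dm m ` bd0 b0 = bd0 b0" if m: "m > 0" for m
  proof -
    let ?f = "act1 (Dm m)"
    have inj: "inj_on ?f Dom"
    proof (rule inj_onI)
      fix b b' assume bb: "b \<in> Dom" "b' \<in> Dom" "?f b = ?f b'"
      have e: "Dm m ` supp1 b = Dm m ` supp1 b'" "Dm m ` bd0 b = Dm m ` bd0 b'" "Dm m ` bd1 b = Dm m ` bd1 b'"
        using bb(3) by (auto simp: act1_def)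
      have "supp1 b = supp1 b'" "bd0 b = bd0 b'" "bd1 b = bd1 b'"
        using e bb(1,2) inj_on_image_eq_iff[OF Dm_inj[OF m]] by (auto simp: Dom_def)
      then show "b = b'" by (metis prod.collapse supp1_def bd0_def bd1_def)
    qed
    have opp: "\<And>b. ?f (opp1 b) = opp1 (?f b)"
      by (simp add: act1_def opp1_def supp1_def bd0_def bd1_def)
    have "FK_eq (map ?f w) (P (Dm m ` aup) (Dm m ` alo))"
      using P aup_K alo_K Dm_moeb[OF m] by (simp add: covariant_pfs_def w_def)
    then have "FK_eq (map ?f w) w" using Dm_aup[OF m] Dm_alo[OF m] by (simp add: w_def)
    then have "NF (map ?f w) = NF w" by (rule NF_FK)
    then have "map ?f (NF w) = NF w" using NF_map[OF inj opp oD wD] by simp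
    then have e: "?f b0 = b0" using b0w by (metis map_eq_conv list.map_id id_apply)
    have "supp1 (?f b0) = Dm m ` supp1 b0" "bd0 (?f b0) = Dm m ` bd0 b0"
      by (simp_all add: act1_def supp1_def bd0_def)
    then show ?thesis using e by simp
  qed
  have sK: "supp1 b0 \<in> circle_intervals" "bd0 b0 \<in> circle_intervals"
    and sb: "bd0 b0 \<subseteq> supp1 b0" "bd0 b0 \<noteq> supp1 b0" using b0T by (auto simp: T1_def)
  have c1: "supp1 b0 = aup \<or> supp1 b0 = alo" using classify[OF sK(1)] fix0 by blast
  have c2: "bd0 b0 = aup \<or> bd0 b0 = alo" using classify[OF sK(2)] fix0 by blast
  have i1: "\<i> \<in> aup" "\<i> \<notin> alo" "- \<i> \<in> alo" "- \<i> \<notin> aup" by (auto simp: aup_def alo_def circle_def)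
  show False using c1 c2 sb i1 by blast
qed



theorem corollary4p6:
  shows "has_covariant_pfs double_cones poincare_group \<and>
         \<not> has_covariant_pfs circle_intervals moebius_group"
  using part1 part2 by blast

end
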